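(* Let $\mathcal{G}$ be the real Lie algebra with basis $X_1,X_2,X_3$ and brackets $[X_1,X_2]=-X_2-X_3$, $[X_2,X_3]=0$, $[X_3,X_1]=X_2+X_3$ (Bianchi type $III$). Every real Manin triple $(\mathcal{D},\mathcal{G}',\tilde{\mathcal{G}}')$ with $\mathcal{G}'\cong\mathcal{G}$ is isomorphic to exactly one Manin triple $(\mathcal{D},\mathcal{G},\tilde{\mathcal{G}})$ in which $\tilde{\mathcal{G}}$, in the basis $\tilde X^1,\tilde X^2,\tilde X^3$ dual to $X_1,X_2,X_3$, has one of the following bracket structures: (a) (Bianchi $I$) all brackets zero; (b) (Bianchi $II$) $[\tilde X^1,\tilde X^2]=0$, $[\tilde X^2,\tilde X^3]=\tilde X^1$, $[\tilde X^3,\tilde X^1]=0$; (c) (Bianchi $III$) (i) $[\tilde X^1,\tilde X^2]=-b(\tilde X^2+\tilde X^3)$, $[\tilde X^2,\tilde X^3]=0$, $[\tilde X^3,\tilde X^1]=b(\tilde X^2+\tilde X^3)$, $b\in\mathbb{R}\setminus\{0\}$; (ii) $[\tilde X^1,\tilde X^2]=0$, $[\tilde X^2,\tilde X^3]=\tilde X^2+\tilde X^3$, $[\tilde X^3,\tilde X^1]=0$; (iii) $[\tilde X^1,\tilde X^2]=\tilde X^1$, $[\tilde X^2,\tilde X^3]=0$, $[\tilde X^3,\tilde X^1]=-\tilde X^1$.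
   Context: A real Manin triple $(\mathcal{D},\mathcal{G},\tilde{\mathcal{G}})$ consists of a real Lie algebra $\mathcal{D}$ with a symmetric, ad-invariant, nondegenerate bilinear form $\langle\cdot,\cdot\rangle$, and two maximally isotropic Lie subalgebras $\mathcal{G},\tilde{\mathcal{G}}$ with $\mathcal{D}=\mathcal{G}\oplus\tilde{\mathcal{G}}$ as vector spaces; here $\dim\mathcal{D}=6$, $\dim\mathcal{G}=\dim\tilde{\mathcal{G}}=3$. Bases $X_i$ of $\mathcal{G}$ and $\tilde X^i$ of $\tilde{\mathcal{G}}$ are dual if $\langle X_i,X_j\rangle=0$, $\langle X_i,\tilde X^j\rangle=\delta_i^j$, $\langle\tilde X^i,\tilde X^j\rangle=0$. If $[X_i,X_j]=f_{ij}{}^kX_k$ and $[\tilde X^i,\tilde X^j]=\tilde f^{ij}{}_k\tilde X^k$, ad-invariance forces $[X_i,\tilde X^j]=f_{ki}{}^j\tilde X^k+\tilde f^{jk}{}_iX_k$, so the triple is determined by the brackets of $\mathcal{G}$ and $\tilde{\mathcal{G}}$ in dual bases. Two Manin triples are isomorphic if there is a Lie algebra isomorphism of the doubles preserving the bilinear forms and mapping first subalgebra to first subalgebra and second to second; equivalently, they are related by a change of basis $X_i'=X_kA^k{}_i$, $\tilde X'^j=(A^{-1})^j{}_k\tilde X^k$. Different values of the parameter $b$ give non-isomorphic triples. *)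

theory Defs
  imports "HOL-Analysis.Analysis"
begin

datatype idx = I1 | I2 | I3

lemma UNIV_idx: "(UNIV :: idx set) = {I1, I2, I3}"
  using idx.exhaust by blast

instance idx :: finite
  by standard (simp add: UNIV_idx)

text \<open>Structure constants of a 3-dimensional algebra: sc i j k is the coefficient
  f_{ij}^k in [X_i, X_j] = sum_k f_{ij}^k X_k.\<close>

type_synonym sconst = "idx \<Rightarrow> idx \<Rightarrow> idx \<Rightarrow> real"

definition vec3 :: "real \<Rightarrow> real \<Rightarrow> real \<Rightarrow> idx \<Rightarrow> real" where
  "vec3 a b c = (\<lambda>i. case i of I1 \<Rightarrow> a | I2 \<Rightarrow> b | I3 \<Rightarrow> c)"

definition sc3 :: "(idx \<Rightarrow> real) \<Rightarrow> (idx \<Rightarrow> real) \<Rightarrow> (idx \<Rightarrow> real) \<Rightarrow> sconst" where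
  "sc3 c12 c23 c31 = (\<lambda>i j k. case (i, j) of
      (I1, I2) \<Rightarrow> c12 k | (I2, I1) \<Rightarrow> - c12 k
    | (I2, I3) \<Rightarrow> c23 k | (I3, I2) \<Rightarrow> - c23 k
    | (I3, I1) \<Rightarrow> c31 k | (I1, I3) \<Rightarrow> - c31 k
    | _ \<Rightarrow> 0)"

text \<open>The Drinfeld double D = G + G~ with basis Inl i = X_i, Inr i = X~^i.
  double_sc f ft a b c is the coefficient of basis vector c in [a, b], using
  [X_i,X_j] = f_{ij}^k X_k, [X~^i,X~^j] = ft^{ij}_k X~^k,
  [X_i,X~^j] = f_{ki}^j X~^k + ft^{jk}_i X_k.\<close>

definition double_sc :: "sconst \<Rightarrow> sconst \<Rightarrow> (idx + idx) \<Rightarrow> (idx + idx) \<Rightarrow> (idx + idx) \<Rightarrow> real" where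
  "double_sc f ft a b c = (case (a, b, c) of
      (Inl i, Inl j, Inl k) \<Rightarrow> f i j k
    | (Inl i, Inl j, Inr k) \<Rightarrow> 0
    | (Inr i, Inr j, Inr k) \<Rightarrow> ft i j k
    | (Inr i, Inr j, Inl k) \<Rightarrow> 0
    | (Inl i, Inr j, Inr k) \<Rightarrow> f k i j
    | (Inl i, Inr j, Inl k) \<Rightarrow> ft j k i
    | (Inr j, Inl i, Inr k) \<Rightarrow> - f k i j
    | (Inr j, Inl i, Inl k) \<Rightarrow> - ft j k i)"

definition double_form :: "(idx + idx) \<Rightarrow> (idx + idx) \<Rightarrow> real" where
  "double_form a b = (case (a, b) of
      (Inl i, Inr j) \<Rightarrow> (if i = j then 1 else 0)
    | (Inr i, Inl j) \<Rightarrow> (if i = j then 1 else 0)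
    | _ \<Rightarrow> 0)"

definition lie_sc :: "('b::finite \<Rightarrow> 'b \<Rightarrow> 'b \<Rightarrow> real) \<Rightarrow> bool" where
  "lie_sc C \<longleftrightarrow>
     (\<forall>a b c. C a b c = - C b a c) \<and>
     (\<forall>a b c e. (\<Sum>d\<in>UNIV. C a b d * C d c e + C b c d * C d a e + C c a d * C d b e) = 0)"

definition ad_invariant :: "('b::finite \<Rightarrow> 'b \<Rightarrow> 'b \<Rightarrow> real) \<Rightarrow> ('b \<Rightarrow> 'b \<Rightarrow> real) \<Rightarrow> bool" where
  "ad_invariant C g \<longleftrightarrow>
     (\<forall>a b c. (\<Sum>d\<in>UNIV. C a b d * g d c) + (\<Sum>d\<in>UNIV. C a c d * g b d) = 0)"

text \<open>(f, ft) are the structure constants, in dual bases, of a real Manin triple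
  (D, G, G~): the double is a Lie algebra and the canonical pairing is ad-invariant.
  (Symmetry, nondegeneracy, isotropy of G and G~ and D = G + G~ hold by construction.)\<close>

definition manin_triple :: "sconst \<Rightarrow> sconst \<Rightarrow> bool" where
  "manin_triple f ft \<longleftrightarrow>
     lie_sc (double_sc f ft) \<and> ad_invariant (double_sc f ft) double_form"

text \<open>Change of basis X'_i = X_k A^k_i (with A^k_i = A $ k $ i): new structure constants.\<close>

definition basis_change :: "real^idx^idx \<Rightarrow> sconst \<Rightarrow> sconst" where
  "basis_change A f = (\<lambda>i j n. \<Sum>k\<in>UNIV. \<Sum>l\<in>UNIV. \<Sum>m\<in>UNIV.
       A$k$i * A$l$j * f k l m * matrix_inv A $ n $ m)"

text \<open>Corresponding change of the dual basis X~'^j = (A^{-1})^j_k X~^k.\<close>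

definition dual_basis_change :: "real^idx^idx \<Rightarrow> sconst \<Rightarrow> sconst" where
  "dual_basis_change A ft = (\<lambda>i j n. \<Sum>k\<in>UNIV. \<Sum>l\<in>UNIV. \<Sum>m\<in>UNIV.
       matrix_inv A $ i $ k * matrix_inv A $ j $ l * ft k l m * A$m$n)"

definition lie_isomorphic :: "sconst \<Rightarrow> sconst \<Rightarrow> bool" where
  "lie_isomorphic f1 f2 \<longleftrightarrow> (\<exists>A. invertible A \<and> basis_change A f1 = f2)"

definition manin_isomorphic :: "sconst \<Rightarrow> sconst \<Rightarrow> sconst \<Rightarrow> sconst \<Rightarrow> bool" where
  "manin_isomorphic f1 ft1 f2 ft2 \<longleftrightarrow>
     (\<exists>A. invertible A \<and> basis_change A f1 = f2 \<and> dual_basis_change A ft1 = ft2)"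

definition bianchiIII :: sconst where
  "bianchiIII = sc3 (vec3 0 (-1) (-1)) (vec3 0 0 0) (vec3 0 1 1)"

definition dual_I :: sconst where
  "dual_I = sc3 (vec3 0 0 0) (vec3 0 0 0) (vec3 0 0 0)"

definition dual_II :: sconst where
  "dual_II = sc3 (vec3 0 0 0) (vec3 1 0 0) (vec3 0 0 0)"

definition dual_III_i :: "real \<Rightarrow> sconst" where
  "dual_III_i b = sc3 (vec3 0 (-b) (-b)) (vec3 0 0 0) (vec3 0 b b)"

definition dual_III_ii :: sconst where
  "dual_III_ii = sc3 (vec3 0 0 0) (vec3 0 1 1) (vec3 0 0 0)"

definition dual_III_iii :: sconst where
  "dual_III_iii = sc3 (vec3 1 0 0) (vec3 0 0 0) (vec3 (-1) 0 0)"

definition normal_forms :: "sconst set" where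
  "normal_forms = {dual_I, dual_II, dual_III_ii, dual_III_iii} \<union> {dual_III_i b | b. b \<noteq> 0}"

end

theory Submission
  imports Defs
begin


lemma sum_idx: "(\<Sum>i\<in>UNIV. g i) = g I1 + g I2 + g I3"
  by (simp add: UNIV_idx add.assoc)

lemma inv_props:
  fixes A :: "real^idx^idx"
  assumes "invertible A"
  shows "A ** matrix_inv A = mat 1" "matrix_inv A ** A = mat 1"
proof -
  have "\<exists>A'. A ** A' = mat 1 \<and> A' ** A = mat 1" using assms unfolding invertible_def by blast
  then have "A ** matrix_inv A = mat 1 \<and> matrix_inv A ** A = mat 1"
    unfolding matrix_inv_def by (rule someI_ex)
  then show "A ** matrix_inv A = mat 1" "matrix_inv A ** A = mat 1" by auto
qed

lemma inv_comp:
  fixes A :: "real^idx^idx"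
  assumes "invertible A"
  shows "\<And>i k. (\<Sum>j\<in>UNIV. A$i$j * matrix_inv A$j$k) = (if i = k then 1 else 0)"
    "\<And>i k. (\<Sum>j\<in>UNIV. matrix_inv A$i$j * A$j$k) = (if i = k then 1 else 0)"
proof -
  fix i k
  have "(A ** matrix_inv A) $ i $ k = mat 1 $ i $ k" using inv_props[OF assms] by simp
  then show "(\<Sum>j\<in>UNIV. A$i$j * matrix_inv A$j$k) = (if i = k then 1 else 0)"
    by (simp add: matrix_matrix_mult_def mat_def)
  have "(matrix_inv A ** A) $ i $ k = mat 1 $ i $ k" using inv_props[OF assms] by simp
  then show "(\<Sum>j\<in>UNIV. matrix_inv A$i$j * A$j$k) = (if i = k then 1 else 0)"
    by (simp add: matrix_matrix_mult_def mat_def)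
qed

lemma invertible_inv:
  fixes A :: "real^idx^idx"
  assumes "invertible A" shows "invertible (matrix_inv A)"
  using inv_props[OF assms] unfolding invertible_def by blast

lemma rgA:
  fixes G :: "idx \<Rightarrow> idx \<Rightarrow> idx \<Rightarrow> real" and c :: "idx \<Rightarrow> idx \<Rightarrow> real" and d :: "idx \<Rightarrow> real"
  shows "(\<Sum>m\<in>UNIV. (\<Sum>k\<in>UNIV. \<Sum>l\<in>UNIV. \<Sum>p\<in>UNIV. G k l p * c p m) * d m)
  = (\<Sum>k\<in>UNIV. \<Sum>l\<in>UNIV. \<Sum>p\<in>UNIV. G k l p * (\<Sum>m\<in>UNIV. c p m * d m))"
  by (simp add: sum_idx algebra_simps)

lemma rgB:
  fixes a b :: "idx \<Rightarrow> real" and c d :: "idx \<Rightarrow> idx \<Rightarrow> real" and F :: "idx \<Rightarrow> idx \<Rightarrow> idx \<Rightarrow> real"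
  shows "(\<Sum>i\<in>UNIV. \<Sum>j\<in>UNIV. a i * b j * (\<Sum>k\<in>UNIV. \<Sum>l\<in>UNIV. \<Sum>m\<in>UNIV. c i k * d j l * F k l m))
  = (\<Sum>k\<in>UNIV. \<Sum>l\<in>UNIV. \<Sum>m\<in>UNIV. (\<Sum>i\<in>UNIV. a i * c i k) * (\<Sum>j\<in>UNIV. b j * d j l) * F k l m)"
  by (simp add: sum_idx algebra_simps)

lemma rgC:
  fixes X :: "idx \<Rightarrow> idx \<Rightarrow> idx \<Rightarrow> real" and d :: "idx \<Rightarrow> real"
  shows "(\<Sum>k\<in>UNIV. \<Sum>l\<in>UNIV. \<Sum>m\<in>UNIV. X k l m * d m) = (\<Sum>m\<in>UNIV. (\<Sum>k\<in>UNIV. \<Sum>l\<in>UNIV. X k l m) * d m)"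
  by (simp add: sum_idx algebra_simps)

lemma rgD:
  fixes g d :: "idx \<Rightarrow> real" and c :: "idx \<Rightarrow> idx \<Rightarrow> real"
  shows "(\<Sum>m\<in>UNIV. (\<Sum>r\<in>UNIV. g r * c m r) * d m) = (\<Sum>r\<in>UNIV. g r * (\<Sum>m\<in>UNIV. c m r * d m))"
  by (simp add: sum_idx algebra_simps)

lemma rgE:
  fixes a b :: "idx \<Rightarrow> real" and c d :: "idx \<Rightarrow> idx \<Rightarrow> real" and F :: "idx \<Rightarrow> idx \<Rightarrow> real"
  shows "(\<Sum>k\<in>UNIV. \<Sum>l\<in>UNIV. a k * b l * (\<Sum>i\<in>UNIV. \<Sum>j\<in>UNIV. c k i * d l j * F i j))
    = (\<Sum>i\<in>UNIV. \<Sum>j\<in>UNIV. (\<Sum>k\<in>UNIV. a k * c k i) * (\<Sum>l\<in>UNIV. b l * d l j) * F i j)"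
  by (simp add: sum_idx algebra_simps)

lemma rgF:
  fixes a b c :: "idx \<Rightarrow> real" and F :: "idx \<Rightarrow> idx \<Rightarrow> idx \<Rightarrow> real"
  shows "(\<Sum>p\<in>UNIV. \<Sum>q\<in>UNIV. a p * b q * (\<Sum>n\<in>UNIV. F p q n * c n))
    = (\<Sum>n\<in>UNIV. (\<Sum>p\<in>UNIV. \<Sum>q\<in>UNIV. a p * b q * F p q n) * c n)"
  by (simp add: sum_idx algebra_simps)

lemma rgE2:
  fixes a c :: "idx \<Rightarrow> idx \<Rightarrow> real" and b d :: "idx \<Rightarrow> real" and F :: "idx \<Rightarrow> idx \<Rightarrow> real"
  shows "(\<Sum>k\<in>UNIV. \<Sum>l\<in>UNIV. (\<Sum>p\<in>UNIV. a k p * b p) * (\<Sum>q\<in>UNIV. c l q * d q) * F k l)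
    = (\<Sum>p\<in>UNIV. \<Sum>q\<in>UNIV. b p * d q * (\<Sum>k\<in>UNIV. \<Sum>l\<in>UNIV. a k p * c l q * F k l))"
  by (simp add: sum_idx algebra_simps)

lemma rgE3:
  fixes x u :: "idx \<Rightarrow> real" and y v :: "idx \<Rightarrow> idx \<Rightarrow> real" and F :: "idx \<Rightarrow> idx \<Rightarrow> real"
  shows "(\<Sum>i\<in>UNIV. \<Sum>j\<in>UNIV. (\<Sum>p\<in>UNIV. x p * y p i) * (\<Sum>q\<in>UNIV. u q * v q j) * F i j)
    = (\<Sum>p\<in>UNIV. \<Sum>q\<in>UNIV. x p * u q * (\<Sum>i\<in>UNIV. \<Sum>j\<in>UNIV. y p i * v q j * F i j))"
  by (simp add: sum_idx algebra_simps)

definition Rb :: "real^idx^idx \<Rightarrow> sconst \<Rightarrow> sconst \<Rightarrow> bool" where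
  "Rb A f f2 \<longleftrightarrow> (\<forall>i j m. (\<Sum>k\<in>UNIV. \<Sum>l\<in>UNIV. A$k$i * A$l$j * f k l m) = (\<Sum>n\<in>UNIV. f2 i j n * A$m$n))"

definition Rd :: "real^idx^idx \<Rightarrow> sconst \<Rightarrow> sconst \<Rightarrow> bool" where
  "Rd A ft ft2 \<longleftrightarrow> (\<forall>a b n. (\<Sum>i\<in>UNIV. \<Sum>j\<in>UNIV. A$a$i * A$b$j * ft2 i j n) = (\<Sum>m\<in>UNIV. ft a b m * A$m$n))"

lemma delta_sum1: "(\<Sum>p\<in>UNIV. (g::idx\<Rightarrow>real) p * (if m = p then 1 else 0)) = (g m :: real)"
  by (simp add: if_distrib sum.delta sum.delta' cong: if_cong)

lemma bc_Rb:
  assumes inv: "invertible A"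
  shows "Rb A f (basis_change A f)"
  unfolding Rb_def
proof (intro allI)
  fix i j m
  let ?B = "matrix_inv A"
  have "(\<Sum>n\<in>UNIV. basis_change A f i j n * A$m$n)
      = (\<Sum>n\<in>UNIV. (\<Sum>k\<in>UNIV. \<Sum>l\<in>UNIV. \<Sum>p\<in>UNIV. (A$k$i * A$l$j * f k l p) * ?B$n$p) * A$m$n)"
    by (simp add: basis_change_def)
  also have "\<dots> = (\<Sum>k\<in>UNIV. \<Sum>l\<in>UNIV. \<Sum>p\<in>UNIV. (A$k$i * A$l$j * f k l p) * (\<Sum>n\<in>UNIV. ?B$n$p * A$m$n))"
    by (rule rgA)
  also have "\<dots> = (\<Sum>k\<in>UNIV. \<Sum>l\<in>UNIV. \<Sum>p\<in>UNIV. (A$k$i * A$l$j * f k l p) * (if m = p then 1 else 0))"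
    using inv_comp(1)[OF inv] by (simp add: mult.commute)
  also have "\<dots> = (\<Sum>k\<in>UNIV. \<Sum>l\<in>UNIV. A$k$i * A$l$j * f k l m)"
    by (simp add: delta_sum1)
  finally show "(\<Sum>k\<in>UNIV. \<Sum>l\<in>UNIV. A$k$i * A$l$j * f k l m) = (\<Sum>n\<in>UNIV. basis_change A f i j n * A$m$n)" ..
qed

lemma Rb_bc:
  assumes inv: "invertible A" and R: "Rb A f f2"
  shows "basis_change A f = f2"
proof (intro ext)
  fix i j n
  let ?B = "matrix_inv A"
  have "basis_change A f i j n = (\<Sum>k\<in>UNIV. \<Sum>l\<in>UNIV. \<Sum>m\<in>UNIV. (A$k$i * A$l$j * f k l m) * ?B$n$m)"
    by (simp add: basis_change_def)
  also have "\<dots> = (\<Sum>m\<in>UNIV. (\<Sum>k\<in>UNIV. \<Sum>l\<in>UNIV. A$k$i * A$l$j * f k l m) * ?B$n$m)"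
    by (rule rgC)
  also have "\<dots> = (\<Sum>m\<in>UNIV. (\<Sum>r\<in>UNIV. f2 i j r * A$m$r) * ?B$n$m)"
    using R unfolding Rb_def by simp
  also have "\<dots> = (\<Sum>r\<in>UNIV. f2 i j r * (\<Sum>m\<in>UNIV. A$m$r * ?B$n$m))"
    by (rule rgD)
  also have "\<dots> = (\<Sum>r\<in>UNIV. f2 i j r * (if n = r then 1 else 0))"
    using inv_comp(2)[OF inv] by (simp add: mult.commute)
  also have "\<dots> = f2 i j n" by (simp add: delta_sum1)
  finally show "basis_change A f i j n = f2 i j n" .
qed

lemma bc_iff: "invertible A \<Longrightarrow> basis_change A f = f2 \<longleftrightarrow> Rb A f f2"
  using bc_Rb Rb_bc by blast

lemma delta_sum2: "(\<Sum>p\<in>UNIV. (g::idx\<Rightarrow>real) p * (if p = m then 1 else 0)) = g m"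
  by (simp add: if_distrib sum.delta sum.delta' cong: if_cong)

lemma delta3a: "(\<Sum>k\<in>UNIV. \<Sum>l\<in>UNIV. \<Sum>m\<in>UNIV. (if a = k then 1 else 0) * (if b = l then 1 else 0) * (F::idx\<Rightarrow>idx\<Rightarrow>idx\<Rightarrow>real) k l m)
   = (\<Sum>m\<in>UNIV. F a b m)"
  by (cases a; cases b; simp add: sum_idx)

lemma delta3b: "(\<Sum>k\<in>UNIV. \<Sum>l\<in>UNIV. \<Sum>m\<in>UNIV. (if k = a then 1 else 0) * (if l = b then 1 else 0) * (F::idx\<Rightarrow>idx\<Rightarrow>idx\<Rightarrow>real) k l m)
   = (\<Sum>m\<in>UNIV. F a b m)"
  by (cases a; cases b; simp add: sum_idx)

lemma delta2a: "(\<Sum>k\<in>UNIV. \<Sum>l\<in>UNIV. (if a = k then 1 else 0) * (if b = l then 1 else 0) * (F::idx\<Rightarrow>idx\<Rightarrow>real) k l)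
   = F a b"
  by (cases a; cases b; simp add: sum_idx)

lemma dbc_Rd:
  assumes inv: "invertible A"
  shows "Rd A ft (dual_basis_change A ft)"
  unfolding Rd_def
proof (intro allI)
  fix a b n
  let ?B = "matrix_inv A"
  have "(\<Sum>i\<in>UNIV. \<Sum>j\<in>UNIV. A$a$i * A$b$j * dual_basis_change A ft i j n)
     = (\<Sum>i\<in>UNIV. \<Sum>j\<in>UNIV. A$a$i * A$b$j * (\<Sum>k\<in>UNIV. \<Sum>l\<in>UNIV. \<Sum>m\<in>UNIV. ?B$i$k * ?B$j$l * (ft k l m * A$m$n)))"
    by (simp add: dual_basis_change_def mult_ac)
  also have "\<dots> = (\<Sum>k\<in>UNIV. \<Sum>l\<in>UNIV. \<Sum>m\<in>UNIV. (\<Sum>i\<in>UNIV. A$a$i * ?B$i$k) * (\<Sum>j\<in>UNIV. A$b$j * ?B$j$l) * (ft k l m * A$m$n))"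
    by (rule rgB)
  also have "\<dots> = (\<Sum>k\<in>UNIV. \<Sum>l\<in>UNIV. \<Sum>m\<in>UNIV. (if a = k then 1 else 0) * (if b = l then 1 else 0) * (ft k l m * A$m$n))"
    by (simp only: inv_comp(1)[OF inv])
  also have "\<dots> = (\<Sum>m\<in>UNIV. ft a b m * A$m$n)"
    by (rule delta3a)
  finally show "(\<Sum>i\<in>UNIV. \<Sum>j\<in>UNIV. A$a$i * A$b$j * dual_basis_change A ft i j n) = (\<Sum>m\<in>UNIV. ft a b m * A$m$n)" .
qed

lemma Rd_dbc:
  assumes inv: "invertible A" and R: "Rd A ft ft2"
  shows "dual_basis_change A ft = ft2"
proof (intro ext)
  fix i j n
  let ?B = "matrix_inv A"
  have "dual_basis_change A ft i j n = (\<Sum>k\<in>UNIV. \<Sum>l\<in>UNIV. ?B$i$k * ?B$j$l * (\<Sum>m\<in>UNIV. ft k l m * A$m$n))"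
    by (simp add: dual_basis_change_def sum_distrib_left mult_ac)
  also have "\<dots> = (\<Sum>k\<in>UNIV. \<Sum>l\<in>UNIV. ?B$i$k * ?B$j$l * (\<Sum>i'\<in>UNIV. \<Sum>j'\<in>UNIV. A$k$i' * A$l$j' * ft2 i' j' n))"
    using R unfolding Rd_def by simp
  also have "\<dots> = (\<Sum>i'\<in>UNIV. \<Sum>j'\<in>UNIV. (\<Sum>k\<in>UNIV. ?B$i$k * A$k$i') * (\<Sum>l\<in>UNIV. ?B$j$l * A$l$j') * ft2 i' j' n)"
    by (rule rgE)
  also have "\<dots> = (\<Sum>i'\<in>UNIV. \<Sum>j'\<in>UNIV. (if i = i' then 1 else 0) * (if j = j' then 1 else 0) * ft2 i' j' n)"
    by (simp only: inv_comp(2)[OF inv])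
  also have "\<dots> = ft2 i j n" by (rule delta2a)
  finally show "dual_basis_change A ft i j n = ft2 i j n" .
qed

lemma dbc_iff: "invertible A \<Longrightarrow> dual_basis_change A ft = ft2 \<longleftrightarrow> Rd A ft ft2"
  using dbc_Rd Rd_dbc by blast

lemma Rb_sym:
  assumes inv: "invertible A" and R: "Rb A f f2"
  shows "Rb (matrix_inv A) f2 f"
  unfolding Rb_def
proof (intro allI)
  fix i j m
  let ?B = "matrix_inv A"
  have f2: "f2 = basis_change A f" using Rb_bc[OF inv R] by simp
  have "(\<Sum>k\<in>UNIV. \<Sum>l\<in>UNIV. ?B$k$i * ?B$l$j * f2 k l m)
     = (\<Sum>k\<in>UNIV. \<Sum>l\<in>UNIV. ?B$k$i * ?B$l$j * (\<Sum>p\<in>UNIV. \<Sum>q\<in>UNIV. \<Sum>r\<in>UNIV. A$p$k * A$q$l * (f p q r * ?B$m$r)))"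
    by (simp add: f2 basis_change_def mult_ac)
  also have "\<dots> = (\<Sum>p\<in>UNIV. \<Sum>q\<in>UNIV. \<Sum>r\<in>UNIV. (\<Sum>k\<in>UNIV. ?B$k$i * A$p$k) * (\<Sum>l\<in>UNIV. ?B$l$j * A$q$l) * (f p q r * ?B$m$r))"
    by (rule rgB)
  also have "\<dots> = (\<Sum>p\<in>UNIV. \<Sum>q\<in>UNIV. \<Sum>r\<in>UNIV. (if p = i then 1 else 0) * (if q = j then 1 else 0) * (f p q r * ?B$m$r))"
    using inv_comp(1)[OF inv] by (simp add: mult.commute)
  also have "\<dots> = (\<Sum>r\<in>UNIV. f i j r * ?B$m$r)"
    by (rule delta3b)
  finally show "(\<Sum>k\<in>UNIV. \<Sum>l\<in>UNIV. ?B$k$i * ?B$l$j * f2 k l m) = (\<Sum>n\<in>UNIV. f i j n * ?B$m$n)" .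
qed

lemma Rd_sym:
  assumes inv: "invertible A" and R: "Rd A ft ft2"
  shows "Rd (matrix_inv A) ft2 ft"
  unfolding Rd_def
proof (intro allI)
  fix a b n
  let ?B = "matrix_inv A"
  have f2: "ft2 = dual_basis_change A ft" using Rd_dbc[OF inv R] by simp
  have "(\<Sum>m\<in>UNIV. ft2 a b m * ?B$m$n)
     = (\<Sum>m\<in>UNIV. (\<Sum>k\<in>UNIV. \<Sum>l\<in>UNIV. \<Sum>p\<in>UNIV. (?B$a$k * ?B$b$l * ft k l p) * A$p$m) * ?B$m$n)"
    by (simp add: f2 dual_basis_change_def)
  also have "\<dots> = (\<Sum>k\<in>UNIV. \<Sum>l\<in>UNIV. \<Sum>p\<in>UNIV. (?B$a$k * ?B$b$l * ft k l p) * (\<Sum>m\<in>UNIV. A$p$m * ?B$m$n))"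
    by (rule rgA)
  also have "\<dots> = (\<Sum>k\<in>UNIV. \<Sum>l\<in>UNIV. \<Sum>p\<in>UNIV. (?B$a$k * ?B$b$l * ft k l p) * (if p = n then 1 else 0))"
    by (simp only: inv_comp(1)[OF inv])
  also have "\<dots> = (\<Sum>k\<in>UNIV. \<Sum>l\<in>UNIV. ?B$a$k * ?B$b$l * ft k l n)"
    by (simp only: delta_sum2)
  finally show "(\<Sum>i\<in>UNIV. \<Sum>j\<in>UNIV. ?B$a$i * ?B$b$j * ft i j n) = (\<Sum>m\<in>UNIV. ft2 a b m * ?B$m$n)" by simp
qed

lemma mm_entry: "((A::real^idx^idx) ** B)$i$j = (\<Sum>k\<in>UNIV. A$i$k * B$k$j)"
  by (simp add: matrix_matrix_mult_def)

lemma Rb_comp: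
  assumes R1: "Rb A f f2" and R2: "Rb B f2 f3"
  shows "Rb (A ** B) f f3"
  unfolding Rb_def
proof (intro allI)
  fix i j m
  have "(\<Sum>k\<in>UNIV. \<Sum>l\<in>UNIV. (A ** B)$k$i * (A ** B)$l$j * f k l m)
     = (\<Sum>k\<in>UNIV. \<Sum>l\<in>UNIV. (\<Sum>p\<in>UNIV. A$k$p * B$p$i) * (\<Sum>q\<in>UNIV. A$l$q * B$q$j) * f k l m)"
    by (simp add: mm_entry)
  also have "\<dots> = (\<Sum>p\<in>UNIV. \<Sum>q\<in>UNIV. B$p$i * B$q$j * (\<Sum>k\<in>UNIV. \<Sum>l\<in>UNIV. A$k$p * A$l$q * f k l m))"
    by (rule rgE2)
  also have "\<dots> = (\<Sum>p\<in>UNIV. \<Sum>q\<in>UNIV. B$p$i * B$q$j * (\<Sum>n\<in>UNIV. f2 p q n * A$m$n))"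
    using R1 unfolding Rb_def by simp
  also have "\<dots> = (\<Sum>n\<in>UNIV. (\<Sum>p\<in>UNIV. \<Sum>q\<in>UNIV. B$p$i * B$q$j * f2 p q n) * A$m$n)"
    by (rule rgF)
  also have "\<dots> = (\<Sum>n\<in>UNIV. (\<Sum>r\<in>UNIV. f3 i j r * B$n$r) * A$m$n)"
    using R2 unfolding Rb_def by simp
  also have "\<dots> = (\<Sum>r\<in>UNIV. f3 i j r * (\<Sum>n\<in>UNIV. B$n$r * A$m$n))"
    by (rule rgD)
  also have "\<dots> = (\<Sum>r\<in>UNIV. f3 i j r * (A ** B)$m$r)"
    by (simp add: mm_entry mult.commute)
  finally show "(\<Sum>k\<in>UNIV. \<Sum>l\<in>UNIV. (A ** B)$k$i * (A ** B)$l$j * f k l m) = (\<Sum>n\<in>UNIV. f3 i j n * (A ** B)$m$n)" .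
qed

lemma Rd_comp:
  assumes R1: "Rd A ft ft2" and R2: "Rd B ft2 ft3"
  shows "Rd (A ** B) ft ft3"
  unfolding Rd_def
proof (intro allI)
  fix a b n
  have "(\<Sum>i\<in>UNIV. \<Sum>j\<in>UNIV. (A ** B)$a$i * (A ** B)$b$j * ft3 i j n)
     = (\<Sum>i\<in>UNIV. \<Sum>j\<in>UNIV. (\<Sum>p\<in>UNIV. A$a$p * B$p$i) * (\<Sum>q\<in>UNIV. A$b$q * B$q$j) * ft3 i j n)"
    by (simp add: mm_entry)
  also have "\<dots> = (\<Sum>p\<in>UNIV. \<Sum>q\<in>UNIV. A$a$p * A$b$q * (\<Sum>i\<in>UNIV. \<Sum>j\<in>UNIV. B$p$i * B$q$j * ft3 i j n))"
    by (rule rgE3)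
  also have "\<dots> = (\<Sum>p\<in>UNIV. \<Sum>q\<in>UNIV. A$a$p * A$b$q * (\<Sum>m\<in>UNIV. ft2 p q m * B$m$n))"
    using R2 unfolding Rd_def by simp
  also have "\<dots> = (\<Sum>m\<in>UNIV. (\<Sum>p\<in>UNIV. \<Sum>q\<in>UNIV. A$a$p * A$b$q * ft2 p q m) * B$m$n)"
    by (rule rgF)
  also have "\<dots> = (\<Sum>m\<in>UNIV. (\<Sum>k\<in>UNIV. ft a b k * A$k$m) * B$m$n)"
    using R1 unfolding Rd_def by simp
  also have "\<dots> = (\<Sum>k\<in>UNIV. ft a b k * (\<Sum>m\<in>UNIV. A$k$m * B$m$n))"
    by (rule rgD)
  also have "\<dots> = (\<Sum>k\<in>UNIV. ft a b k * (A ** B)$k$n)"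
    by (simp add: mm_entry)
  finally show "(\<Sum>i\<in>UNIV. \<Sum>j\<in>UNIV. (A ** B)$a$i * (A ** B)$b$j * ft3 i j n) = (\<Sum>m\<in>UNIV. ft a b m * (A ** B)$m$n)" .
qed




lemma all_idx: "(\<forall>i::idx. P i) \<longleftrightarrow> P I1 \<and> P I2 \<and> P I3"
  by (metis idx.exhaust)

lemma sum_UNIV_plus: "(\<Sum>x\<in>(UNIV::('a::finite + 'b::finite) set). g x) = (\<Sum>i\<in>UNIV. g (Inl i)) + (\<Sum>i\<in>UNIV. g (Inr i))"
  by (subst UNIV_Plus_UNIV[symmetric], subst sum.Plus) (auto simp: comp_def)

lemma cyc3: "(\<Sum>x\<in>(UNIV::'a::finite set). \<Sum>y\<in>UNIV. \<Sum>v\<in>UNIV. F x y v) = (\<Sum>x\<in>UNIV. \<Sum>y\<in>UNIV. \<Sum>v\<in>UNIV. F y v x)"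
proof -
  have "(\<Sum>x\<in>UNIV. \<Sum>y\<in>UNIV. \<Sum>v\<in>UNIV. F y v x) = (\<Sum>y\<in>UNIV. \<Sum>x\<in>UNIV. \<Sum>v\<in>UNIV. F y v x)"
    by (rule sum.swap)
  also have "\<dots> = (\<Sum>y\<in>UNIV. \<Sum>v\<in>UNIV. \<Sum>x\<in>UNIV. F y v x)"
    by (rule sum.cong[OF refl], rule sum.swap)
  finally show ?thesis by simp
qed

lemma rot3: "(\<Sum>v\<in>(UNIV::'a::finite set). \<Sum>x\<in>UNIV. \<Sum>y\<in>UNIV. G v x y) = (\<Sum>x\<in>UNIV. \<Sum>y\<in>UNIV. \<Sum>v\<in>UNIV. G v x y)"
proof -
  have "(\<Sum>v\<in>UNIV. \<Sum>x\<in>UNIV. \<Sum>y\<in>UNIV. G v x y) = (\<Sum>x\<in>UNIV. \<Sum>v\<in>UNIV. \<Sum>y\<in>UNIV. G v x y)"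
    by (rule sum.swap)
  also have "\<dots> = (\<Sum>x\<in>UNIV. \<Sum>y\<in>UNIV. \<Sum>v\<in>UNIV. G v x y)"
    by (rule sum.cong[OF refl], rule sum.swap)
  finally show ?thesis .
qed

lemma sw4: "(\<Sum>z\<in>(UNIV::'a::finite set). \<Sum>x\<in>UNIV. \<Sum>y\<in>UNIV. \<Sum>v\<in>UNIV. F z x y v) = (\<Sum>x\<in>UNIV. \<Sum>y\<in>UNIV. \<Sum>v\<in>UNIV. \<Sum>z\<in>UNIV. F z x y v)"
proof -
  have "(\<Sum>z\<in>UNIV. \<Sum>x\<in>UNIV. \<Sum>y\<in>UNIV. \<Sum>v\<in>UNIV. F z x y v) = (\<Sum>x\<in>UNIV. \<Sum>z\<in>UNIV. \<Sum>y\<in>UNIV. \<Sum>v\<in>UNIV. F z x y v)"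
    by (rule sum.swap)
  also have "\<dots> = (\<Sum>x\<in>UNIV. \<Sum>y\<in>UNIV. \<Sum>z\<in>UNIV. \<Sum>v\<in>UNIV. F z x y v)"
    by (rule sum.cong[OF refl], rule sum.swap)
  also have "\<dots> = (\<Sum>x\<in>UNIV. \<Sum>y\<in>UNIV. \<Sum>v\<in>UNIV. \<Sum>z\<in>UNIV. F z x y v)"
    by (rule sum.cong[OF refl], rule sum.cong[OF refl], rule sum.swap)
  finally show ?thesis .
qed

definition transf :: "('b::finite \<Rightarrow> 'b \<Rightarrow> real) \<Rightarrow> ('b \<Rightarrow> 'b \<Rightarrow> real) \<Rightarrow> ('b \<Rightarrow> 'b \<Rightarrow> 'b \<Rightarrow> real) \<Rightarrow> ('b \<Rightarrow> 'b \<Rightarrow> 'b \<Rightarrow> real)" where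
  "transf P Q C = (\<lambda>a b c. \<Sum>z\<in>UNIV. (\<Sum>x\<in>UNIV. \<Sum>y\<in>UNIV. P x a * P y b * C x y z) * Q c z)"

lemma contract:
  fixes P Q :: "'b::finite \<Rightarrow> 'b \<Rightarrow> real"
  assumes PQ: "\<And>u z. (\<Sum>d\<in>UNIV. P u d * Q d z) = (if u = z then 1 else 0)"
  shows "(\<Sum>d\<in>UNIV. (\<Sum>z\<in>UNIV. m z * Q d z) * (\<Sum>u\<in>UNIV. P u d * k u)) = (\<Sum>z\<in>UNIV. m z * k z)"
proof -
  have "(\<Sum>d\<in>UNIV. (\<Sum>z\<in>UNIV. m z * Q d z) * (\<Sum>u\<in>UNIV. P u d * k u))
      = (\<Sum>d\<in>UNIV. \<Sum>z\<in>UNIV. \<Sum>u\<in>UNIV. m z * k u * (P u d * Q d z))"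
    by (simp add: sum_distrib_left sum_distrib_right mult_ac)
  also have "\<dots> = (\<Sum>z\<in>UNIV. \<Sum>d\<in>UNIV. \<Sum>u\<in>UNIV. m z * k u * (P u d * Q d z))"
    by (rule sum.swap)
  also have "\<dots> = (\<Sum>z\<in>UNIV. \<Sum>u\<in>UNIV. \<Sum>d\<in>UNIV. m z * k u * (P u d * Q d z))"
    by (rule sum.cong[OF refl], rule sum.swap)
  also have "\<dots> = (\<Sum>z\<in>UNIV. \<Sum>u\<in>UNIV. m z * k u * (\<Sum>d\<in>UNIV. P u d * Q d z))"
    by (simp add: sum_distrib_left)
  also have "\<dots> = (\<Sum>z\<in>UNIV. m z * k z)"
    by (simp add: PQ if_distrib sum.delta' cong: if_cong)
  finally show ?thesis .
qed

lemma transf_jac_term: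
  fixes P Q :: "'b::finite \<Rightarrow> 'b \<Rightarrow> real"
  assumes PQ: "\<And>u z. (\<Sum>d\<in>UNIV. P u d * Q d z) = (if u = z then 1 else 0)"
  shows "(\<Sum>d\<in>UNIV. transf P Q C a b d * transf P Q C d c e)
    = (\<Sum>x\<in>UNIV. \<Sum>y\<in>UNIV. \<Sum>v\<in>UNIV. P x a * P y b * P v c *
          (\<Sum>z\<in>UNIV. \<Sum>w\<in>UNIV. C x y z * C z v w * Q e w))"
proof -
  define m where "m z = (\<Sum>x\<in>UNIV. \<Sum>y\<in>UNIV. P x a * P y b * C x y z)" for z
  define k where "k x = (\<Sum>y\<in>UNIV. \<Sum>z\<in>UNIV. P y c * C x y z * Q e z)" for x
  have 1: "transf P Q C a b d = (\<Sum>z\<in>UNIV. m z * Q d z)" for d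
    by (simp add: transf_def m_def)
  have 2: "transf P Q C d c e = (\<Sum>u\<in>UNIV. P u d * k u)" for d
  proof -
    have "transf P Q C d c e = (\<Sum>z\<in>UNIV. \<Sum>u\<in>UNIV. \<Sum>y\<in>UNIV. P u d * (P y c * C u y z * Q e z))"
      by (simp add: transf_def sum_distrib_left sum_distrib_right mult_ac)
    also have "\<dots> = (\<Sum>u\<in>UNIV. \<Sum>y\<in>UNIV. \<Sum>z\<in>UNIV. P u d * (P y c * C u y z * Q e z))"
      by (rule cyc3[symmetric])
    also have "\<dots> = (\<Sum>u\<in>UNIV. P u d * k u)"
      by (simp add: k_def sum_distrib_left)
    finally show ?thesis .
  qed
  have "(\<Sum>d\<in>UNIV. transf P Q C a b d * transf P Q C d c e) = (\<Sum>z\<in>UNIV. m z * k z)"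
    unfolding 1 2 by (rule contract[OF PQ])
  also have "\<dots> = (\<Sum>z\<in>UNIV. \<Sum>v\<in>UNIV. \<Sum>x\<in>UNIV. \<Sum>y\<in>UNIV. \<Sum>w\<in>UNIV. P x a * P y b * P v c * (C x y z * C z v w * Q e w))"
    by (simp add: m_def k_def sum_distrib_left sum_distrib_right mult_ac)
  also have "\<dots> = (\<Sum>v\<in>UNIV. \<Sum>x\<in>UNIV. \<Sum>y\<in>UNIV. \<Sum>z\<in>UNIV. \<Sum>w\<in>UNIV. P x a * P y b * P v c * (C x y z * C z v w * Q e w))"
    by (rule sw4)
  also have "\<dots> = (\<Sum>x\<in>UNIV. \<Sum>y\<in>UNIV. \<Sum>v\<in>UNIV. \<Sum>z\<in>UNIV. \<Sum>w\<in>UNIV. P x a * P y b * P v c * (C x y z * C z v w * Q e w))"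
    by (rule rot3)
  also have "\<dots> = (\<Sum>x\<in>UNIV. \<Sum>y\<in>UNIV. \<Sum>v\<in>UNIV. P x a * P y b * P v c *
          (\<Sum>z\<in>UNIV. \<Sum>w\<in>UNIV. C x y z * C z v w * Q e w))"
    by (simp add: sum_distrib_left)
  finally show ?thesis .
qed

lemma transf_lie:
  fixes P Q :: "'b::finite \<Rightarrow> 'b \<Rightarrow> real"
  assumes PQ: "\<And>u z. (\<Sum>d\<in>UNIV. P u d * Q d z) = (if u = z then 1 else 0)"
    and L: "lie_sc C"
  shows "lie_sc (transf P Q C)"
proof -
  have as: "C a b c = - C b a c" for a b c using L unfolding lie_sc_def by blast
  have jac: "(\<Sum>d\<in>UNIV. C a b d * C d c e + C b c d * C d a e + C c a d * C d b e) = 0" for a b c e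
    using L unfolding lie_sc_def by blast
  have A: "transf P Q C a b c = - transf P Q C b a c" for a b c
  proof -
    have "transf P Q C b a c = (\<Sum>z\<in>UNIV. (\<Sum>y\<in>UNIV. \<Sum>x\<in>UNIV. P y b * P x a * C y x z) * Q c z)"
      by (simp add: transf_def)
    also have "\<dots> = (\<Sum>z\<in>UNIV. (\<Sum>x\<in>UNIV. \<Sum>y\<in>UNIV. P y b * P x a * C y x z) * Q c z)"
      by (subst sum.swap) (rule refl)
    also have "\<dots> = (\<Sum>z\<in>UNIV. (\<Sum>x\<in>UNIV. \<Sum>y\<in>UNIV. - (P x a * P y b * C x y z)) * Q c z)"
      by (subst as) (simp add: mult_ac)
    also have "\<dots> = - transf P Q C a b c"
      by (simp add: transf_def sum_negf)
    finally show ?thesis by simp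
  qed
  have J: "(\<Sum>d\<in>UNIV. transf P Q C a b d * transf P Q C d c e + transf P Q C b c d * transf P Q C d a e
           + transf P Q C c a d * transf P Q C d b e) = 0" for a b c e
  proof -
    define H where "H x y v = (\<Sum>z\<in>UNIV. \<Sum>w\<in>UNIV. C x y z * C z v w * Q e w)" for x y v
    have H0: "H x y v + H y v x + H v x y = 0" for x y v
    proof -
      have "H x y v + H y v x + H v x y = (\<Sum>z\<in>UNIV. \<Sum>w\<in>UNIV. (C x y z * C z v w + C y v z * C z x w + C v x z * C z y w) * Q e w)"
        by (simp add: H_def sum.distrib algebra_simps)
      also have "\<dots> = (\<Sum>w\<in>UNIV. \<Sum>z\<in>UNIV. (C x y z * C z v w + C y v z * C z x w + C v x z * C z y w) * Q e w)"
        by (rule sum.swap)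
      also have "\<dots> = (\<Sum>w\<in>UNIV. (\<Sum>z\<in>UNIV. C x y z * C z v w + C y v z * C z x w + C v x z * C z y w) * Q e w)"
        by (simp add: sum_distrib_right)
      also have "\<dots> = 0" by (simp add: jac)
      finally show ?thesis .
    qed
    have t1: "(\<Sum>d\<in>UNIV. transf P Q C a b d * transf P Q C d c e) = (\<Sum>x\<in>UNIV. \<Sum>y\<in>UNIV. \<Sum>v\<in>UNIV. P x a * P y b * P v c * H x y v)"
      unfolding H_def by (rule transf_jac_term[OF PQ])
    have "(\<Sum>d\<in>UNIV. transf P Q C b c d * transf P Q C d a e) = (\<Sum>x\<in>UNIV. \<Sum>y\<in>UNIV. \<Sum>v\<in>UNIV. P x b * P y c * P v a * H x y v)"
      unfolding H_def by (rule transf_jac_term[OF PQ])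
    also have "\<dots> = (\<Sum>x\<in>UNIV. \<Sum>y\<in>UNIV. \<Sum>v\<in>UNIV. P y b * P v c * P x a * H y v x)"
      by (rule cyc3)
    finally have t2: "(\<Sum>d\<in>UNIV. transf P Q C b c d * transf P Q C d a e) = (\<Sum>x\<in>UNIV. \<Sum>y\<in>UNIV. \<Sum>v\<in>UNIV. P x a * P y b * P v c * H y v x)"
      by (simp add: mult_ac)
    have "(\<Sum>d\<in>UNIV. transf P Q C c a d * transf P Q C d b e) = (\<Sum>x\<in>UNIV. \<Sum>y\<in>UNIV. \<Sum>v\<in>UNIV. P x c * P y a * P v b * H x y v)"
      unfolding H_def by (rule transf_jac_term[OF PQ])
    also have "\<dots> = (\<Sum>x\<in>UNIV. \<Sum>y\<in>UNIV. \<Sum>v\<in>UNIV. P v c * P x a * P y b * H v x y)"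
      by (rule cyc3[symmetric])
    finally have t3: "(\<Sum>d\<in>UNIV. transf P Q C c a d * transf P Q C d b e) = (\<Sum>x\<in>UNIV. \<Sum>y\<in>UNIV. \<Sum>v\<in>UNIV. P x a * P y b * P v c * H v x y)"
      by (simp add: mult_ac)
    have "(\<Sum>d\<in>UNIV. transf P Q C a b d * transf P Q C d c e + transf P Q C b c d * transf P Q C d a e
           + transf P Q C c a d * transf P Q C d b e)
        = (\<Sum>x\<in>UNIV. \<Sum>y\<in>UNIV. \<Sum>v\<in>UNIV. P x a * P y b * P v c * (H x y v + H y v x + H v x y))"
      by (simp only: sum.distrib t1 t2 t3 distrib_left)
    also have "\<dots> = 0" by (simp add: H0)
    finally show ?thesis .
  qed
  show ?thesis unfolding lie_sc_def using A J by blast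
qed

definition Pm :: "real^idx^idx \<Rightarrow> (idx + idx) \<Rightarrow> (idx + idx) \<Rightarrow> real" where
  "Pm A x y = (case (x, y) of (Inl k, Inl i) \<Rightarrow> A$k$i | (Inr k, Inr j) \<Rightarrow> matrix_inv A $ j $ k | _ \<Rightarrow> 0)"

definition Qm :: "real^idx^idx \<Rightarrow> (idx + idx) \<Rightarrow> (idx + idx) \<Rightarrow> real" where
  "Qm A x y = (case (x, y) of (Inl i, Inl k) \<Rightarrow> matrix_inv A $ i $ k | (Inr j, Inr k) \<Rightarrow> A $ k $ j | _ \<Rightarrow> 0)"

lemma PQm:
  assumes "invertible A"
  shows "(\<Sum>d\<in>UNIV. Pm A u d * Qm A d z) = (if u = z then 1 else 0)"
proof (cases u; cases z)
  fix k k' assume "u = Inl k" "z = Inl k'"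
  then show ?thesis using inv_comp(1)[OF assms, of k k'] by (simp add: sum_UNIV_plus Pm_def Qm_def)
next
  fix k k' assume "u = Inr k" "z = Inr k'"
  then show ?thesis using inv_comp(1)[OF assms, of k' k] by (simp add: sum_UNIV_plus Pm_def Qm_def mult.commute)
qed (simp_all add: sum_UNIV_plus Pm_def Qm_def)

lemma double_transf:
  "double_sc (basis_change A f) (dual_basis_change A ft) = transf (Pm A) (Qm A) (double_sc f ft)"
  apply (rule ext)+
  subgoal for a b c
    by (cases a; cases b; cases c) (simp_all add: transf_def sum_UNIV_plus Pm_def Qm_def double_sc_def
       basis_change_def dual_basis_change_def sum_idx algebra_simps)
  done

lemma lie_transfer:
  assumes "invertible A" "lie_sc (double_sc f ft)"
  shows "lie_sc (double_sc (basis_change A f) (dual_basis_change A ft))"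
  unfolding double_transf by (rule transf_lie[OF PQm[OF assms(1)] assms(2)])




definition form :: "real \<Rightarrow> real \<Rightarrow> real \<Rightarrow> real \<Rightarrow> sconst" where
  "form S P U R = sc3 (vec3 S P P) (vec3 U R R) (vec3 (-S) (-P) (-P))"

definition aut :: "real \<Rightarrow> real \<Rightarrow> real \<Rightarrow> real \<Rightarrow> real^idx^idx" where
  "aut x w y z = (\<chi> k i. case k of I1 \<Rightarrow> (case i of I1 \<Rightarrow> 1 | I2 \<Rightarrow> 0 | I3 \<Rightarrow> 0)
     | I2 \<Rightarrow> (case i of I1 \<Rightarrow> x | I2 \<Rightarrow> y | I3 \<Rightarrow> z)
     | I3 \<Rightarrow> (case i of I1 \<Rightarrow> w | I2 \<Rightarrow> z | I3 \<Rightarrow> y))"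

lemma aut_entry: "aut x w y z $ k $ i = (case k of I1 \<Rightarrow> (case i of I1 \<Rightarrow> 1 | I2 \<Rightarrow> 0 | I3 \<Rightarrow> 0)
     | I2 \<Rightarrow> (case i of I1 \<Rightarrow> x | I2 \<Rightarrow> y | I3 \<Rightarrow> z)
     | I3 \<Rightarrow> (case i of I1 \<Rightarrow> w | I2 \<Rightarrow> z | I3 \<Rightarrow> y))"
  by (simp add: aut_def)

lemma K1: "Rb (aut x w y z) bianchiIII bianchiIII"
  unfolding Rb_def all_idx sum_idx aut_entry bianchiIII_def sc3_def vec3_def
  by (simp add: algebra_simps)

lemma K2:
  assumes "y * y - z * z \<noteq> 0"
  shows "invertible (aut x w y z)"
proof -
  define D where "D = y * y - z * z"
  have D: "D \<noteq> 0" using assms D_def by simp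
  let ?B = "aut (- (y * x - z * w) / D) (- (y * w - z * x) / D) (y / D) (- z / D)"
  have 1: "aut x w y z ** ?B = mat 1"
    unfolding vec_eq_iff mm_entry mat_def all_idx sum_idx aut_entry
    using D by (simp add: field_simps) (simp add: D_def algebra_simps)?
  have 2: "?B ** aut x w y z = mat 1"
    unfolding vec_eq_iff mm_entry mat_def all_idx sum_idx aut_entry
    using D by (simp add: field_simps) (simp add: D_def algebra_simps)?
  show ?thesis unfolding invertible_def using 1 2 by blast
qed

lemma K3a:
  assumes "Rd (aut x w y z) (form S P U R) (form s p u r)"
  shows "s * (y + z) = S + P * (x + w)" "p * (y + z) = P * (y + z)"
    "r * (y * y - z * z) = (y + z) * (R + p * (w - x))"
    "u * (y * y - z * z) = U + R * (x + w) + s * (y + z) * (w - x)"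
proof -
  note h = assms[unfolded Rd_def, rule_format]
  have 1: "y * s + z * s = S + P * x + P * w"
    using h[of I1 I2 I1] by (simp add: sum_idx aut_entry form_def sc3_def vec3_def)
  have 2: "y * p + z * p = P * y + P * z"
    using h[of I1 I2 I2] by (simp add: sum_idx aut_entry form_def sc3_def vec3_def)
  have 3: "x * z * p + x * y * p + (y * y * r - y * w * p) + (- (z * w * p) - z * z * r) = R * y + R * z"
    using h[of I2 I3 I2] by (simp add: sum_idx aut_entry form_def sc3_def vec3_def)
  have 4: "x * z * s + x * y * s + (y * y * u - y * w * s) + (- (z * w * s) - z * z * u) = U + R * x + R * w"
    using h[of I2 I3 I1] by (simp add: sum_idx aut_entry form_def sc3_def vec3_def)
  show "s * (y + z) = S + P * (x + w)" using 1 by (simp add: algebra_simps)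
  show "p * (y + z) = P * (y + z)" using 2 by (simp add: algebra_simps)
  show "r * (y * y - z * z) = (y + z) * (R + p * (w - x))" using 3 by (simp add: algebra_simps)
  show "u * (y * y - z * z) = U + R * (x + w) + s * (y + z) * (w - x)" using 4 by (simp add: algebra_simps)
qed

lemma K3b:
  "Rd (aut x w y z) (form (s * (y + z) - p * (x + w)) p
      (u * (y * y - z * z) - (r * (y - z) - p * (w - x)) * (x + w) - s * (y + z) * (w - x))
      (r * (y - z) - p * (w - x))) (form s p u r)"
  unfolding Rd_def all_idx sum_idx aut_entry form_def sc3_def vec3_def
  by (simp add: algebra_simps)

lemma inv_ker:
  fixes A :: "real^idx^idx"
  assumes "invertible A" "A *v v = 0" shows "v = 0"
  using inj_matrix_vector_mult[OF assms(1)] assms(2)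
  by (metis injD matrix_vector_mult_0_right)

lemma mv_entry: "((A::real^idx^idx) *v v) $ i = (\<Sum>j\<in>UNIV. A$i$j * v$j)"
  by (simp add: matrix_vector_mult_def)

lemma K4:
  assumes inv: "invertible F" and R: "Rb F bianchiIII bianchiIII"
  shows "\<exists>x w y z. F = aut x w y z \<and> y * y - z * z \<noteq> 0"
proof -
  note h = R[unfolded Rb_def, rule_format]
  have e121: "F$I1$I2 + F$I1$I3 = 0"
    using h[of I1 I2 I1] by (simp add: sum_idx bianchiIII_def sc3_def vec3_def; linarith)
  have e122: "- (F$I1$I1 * F$I2$I2) - F$I1$I1 * F$I3$I2 + F$I1$I2 * F$I2$I1 + F$I1$I2 * F$I3$I1 + F$I2$I2 + F$I2$I3 = 0"
    using h[of I1 I2 I2] by (simp add: sum_idx bianchiIII_def sc3_def vec3_def algebra_simps; linarith)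
  have e123: "- (F$I1$I1 * F$I2$I2) - F$I1$I1 * F$I3$I2 + F$I1$I2 * F$I2$I1 + F$I1$I2 * F$I3$I1 + F$I3$I2 + F$I3$I3 = 0"
    using h[of I1 I2 I3] by (simp add: sum_idx bianchiIII_def sc3_def vec3_def algebra_simps; linarith)
  have e132: "- (F$I1$I1 * F$I2$I3) - F$I1$I1 * F$I3$I3 + F$I1$I3 * F$I2$I1 + F$I1$I3 * F$I3$I1 + F$I2$I2 + F$I2$I3 = 0"
    using h[of I1 I3 I2] by (simp add: sum_idx bianchiIII_def sc3_def vec3_def algebra_simps; linarith)
  have e232: "- (F$I1$I2 * F$I2$I3) - F$I1$I2 * F$I3$I3 + F$I1$I3 * F$I2$I2 + F$I1$I3 * F$I3$I2 = 0"
    using h[of I2 I3 I2] by (simp add: sum_idx bianchiIII_def sc3_def vec3_def algebra_simps; linarith)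
  define c where "c = F$I2$I2 + F$I2$I3"
  have c2: "F$I3$I2 + F$I3$I3 = c" using e122 e123 c_def by linarith
  have cnz: "c \<noteq> 0"
  proof
    assume c0: "c = 0"
    let ?v = "(\<chi> i. case i of I1 \<Rightarrow> 0 | I2 \<Rightarrow> 1 | I3 \<Rightarrow> (1::real))"
    have "F *v ?v = 0"
      unfolding vec_eq_iff mv_entry all_idx sum_idx using e121 c0 c2 c_def by simp
    then have "?v = 0" by (rule inv_ker[OF inv])
    then have "?v $ I2 = 0" by simp
    then show False by simp
  qed
  have a13: "F$I1$I3 = - F$I1$I2" using e121 by linarith
  have "F$I1$I2 * (2 * c) = F$I1$I2 * (F$I2$I2 + F$I2$I3) + F$I1$I2 * (F$I3$I2 + F$I3$I3)"
    using c2 c_def by (simp add: algebra_simps)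
  also have "\<dots> = 0"
    using e232 unfolding a13 by (simp add: algebra_simps; linarith)
  finally have "F$I1$I2 * (2 * c) = 0" .
  then have a12: "F$I1$I2 = 0" using cnz by simp
  then have a13': "F$I1$I3 = 0" using a13 by simp
  have s1: "F$I1$I1 * (F$I2$I2 + F$I3$I2) = c" using e122 a12 c_def by (simp add: algebra_simps)
  have s2: "F$I1$I1 * (F$I2$I3 + F$I3$I3) = c" using e132 a13' c_def by (simp add: algebra_simps)
  have "F$I1$I1 * (2 * c) = 2 * c"
  proof -
    have sum2: "(F$I2$I2 + F$I3$I2) + (F$I2$I3 + F$I3$I3) = 2 * c" using c2 c_def by linarith
    have "F$I1$I1 * (2 * c) = F$I1$I1 * (F$I2$I2 + F$I3$I2) + F$I1$I1 * (F$I2$I3 + F$I3$I3)"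
      by (simp only: sum2[symmetric] distrib_left)
    also have "\<dots> = 2 * c" using s1 s2 by simp
    finally show ?thesis .
  qed
  then have a11: "F$I1$I1 = 1" using cnz by simp
  have a32: "F$I3$I2 = F$I2$I3" using s1 a11 c_def by simp
  have a33: "F$I3$I3 = F$I2$I2" using s2 a11 c_def by simp
  have dnz: "F$I2$I2 - F$I2$I3 \<noteq> 0"
  proof
    assume d0: "F$I2$I2 - F$I2$I3 = 0"
    let ?v = "(\<chi> i. case i of I1 \<Rightarrow> 0 | I2 \<Rightarrow> 1 | I3 \<Rightarrow> (-1::real))"
    have "F *v ?v = 0"
      unfolding vec_eq_iff mv_entry all_idx sum_idx using a12 a13' a32 a33 d0 by simp
    then have "?v = 0" by (rule inv_ker[OF inv])
    then have "?v $ I2 = 0" by simp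
    then show False by simp
  qed
  have "F = aut (F$I2$I1) (F$I3$I1) (F$I2$I2) (F$I2$I3)"
    unfolding vec_eq_iff all_idx aut_entry using a11 a12 a13' a32 a33 by simp
  moreover have "F$I2$I2 * F$I2$I2 - F$I2$I3 * F$I2$I3 \<noteq> 0"
  proof -
    have "F$I2$I2 * F$I2$I2 - F$I2$I3 * F$I2$I3 = (F$I2$I2 - F$I2$I3) * c"
      using c_def by (simp add: algebra_simps)
    then show ?thesis using cnz dnz by simp
  qed
  ultimately show ?thesis by blast
qed

lemma K5:
  assumes L: "lie_sc (double_sc bianchiIII ft)"
  shows "\<exists>S P U R. ft = form S P U R \<and> P * U = R * S"
proof -
  have as0: "double_sc bianchiIII ft a b c = - double_sc bianchiIII ft b a c" for a b c
    using L unfolding lie_sc_def by blast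
  have jac: "(\<Sum>d\<in>UNIV. double_sc bianchiIII ft a b d * double_sc bianchiIII ft d c e
      + double_sc bianchiIII ft b c d * double_sc bianchiIII ft d a e
      + double_sc bianchiIII ft c a d * double_sc bianchiIII ft d b e) = 0" for a b c e
    using L unfolding lie_sc_def by blast
  have as: "ft i j k = - ft j i k" for i j k
    using as0[of "Inr i" "Inr j" "Inr k"] by (simp add: double_sc_def)
  have a1: "ft I2 I1 k = - ft I1 I2 k" for k by (rule as)
  have a2: "ft I3 I2 k = - ft I2 I3 k" for k by (rule as)
  have a3: "ft I1 I3 k = - ft I3 I1 k" for k by (rule as)
  have a0: "ft i i k = 0" for i k using as[of i i k] by simp
  note simps = sum_UNIV_plus sum_idx double_sc_def bianchiIII_def sc3_def vec3_def a0 a1 a2 a3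
  have j1: "ft I1 I2 I3 + ft I3 I1 I2 = 0"
    using jac[of "Inl I1" "Inl I2" "Inr I1" "Inl I2"] by (simp add: simps; linarith)
  have j2: "ft I1 I2 I2 + ft I3 I1 I3 = 0"
    using jac[of "Inl I1" "Inl I2" "Inr I1" "Inl I3"] by (simp add: simps; linarith)
  have j3: "- ft I1 I2 I1 + ft I2 I3 I2 - ft I2 I3 I3 - ft I3 I1 I1 = 0"
    using jac[of "Inl I1" "Inl I2" "Inr I2" "Inl I3"] by (simp add: simps; linarith)
  have j4: "- ft I1 I2 I1 - ft I2 I3 I2 + ft I2 I3 I3 - ft I3 I1 I1 = 0"
    using jac[of "Inl I1" "Inl I3" "Inr I2" "Inl I3"] by (simp add: simps; linarith)
  have j5: "- ft I1 I2 I2 + ft I1 I2 I3 - ft I3 I1 I2 + ft I3 I1 I3 = 0"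
    using jac[of "Inl I2" "Inl I3" "Inr I2" "Inl I3"] by (simp add: simps; linarith)
  have j6: "ft I1 I2 I1 * ft I2 I3 I2 - ft I1 I2 I2 * ft I2 I3 I1 + ft I2 I3 I1 * ft I3 I1 I3 - ft I2 I3 I3 * ft I3 I1 I1 = 0"
    using jac[of "Inl I1" "Inr I1" "Inr I2" "Inl I3"] by (simp add: simps algebra_simps; linarith)
  define S where "S = ft I1 I2 I1"
  define P where "P = ft I1 I2 I2"
  define U where "U = ft I2 I3 I1"
  define R where "R = ft I2 I3 I2"
  have b1: "ft I3 I1 I1 = - S" using j3 j4 S_def by linarith
  have b2: "ft I2 I3 I3 = R" using j3 j4 R_def by linarith
  have b3: "ft I1 I2 I3 = P" using j1 j2 j5 P_def by linarith
  have b4: "ft I3 I1 I2 = - P" using j1 b3 by linarith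
  have b5: "ft I3 I1 I3 = - P" using j2 P_def by linarith
  have "ft = form S P U R"
  proof (intro ext)
    fix i j k
    show "ft i j k = form S P U R i j k"
      by (cases i; cases j; cases k) (simp_all add: form_def sc3_def vec3_def a0 a1 a2 a3 b1 b2 b3 b4 b5 S_def P_def U_def R_def)
  qed
  moreover have "P * U = R * S"
  proof -
    have "S * R - P * U + U * (- P) - R * (- S) = 0"
      using j6 unfolding b1 b2 b5 S_def P_def U_def R_def by (simp; metis mult.commute)
    then show ?thesis by (simp add: algebra_simps)
  qed
  ultimately show ?thesis by blast
qed




lemma NF_I: "dual_I = form 0 0 0 0" by (simp add: dual_I_def form_def)
lemma NF_II: "dual_II = form 0 0 1 0" by (simp add: dual_II_def form_def)
lemma NF_i: "dual_III_i b = form 0 (-b) 0 0" by (simp add: dual_III_i_def form_def)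
lemma NF_ii: "dual_III_ii = form 0 0 0 1" by (simp add: dual_III_ii_def form_def)
lemma NF_iii: "dual_III_iii = form 1 0 0 0" by (simp add: dual_III_iii_def form_def)

lemma NF_cases:
  assumes "g \<in> normal_forms"
  shows "g = form 0 0 0 0 \<or> g = form 0 0 1 0 \<or> g = form 0 0 0 1 \<or> g = form 1 0 0 0 \<or> (\<exists>b. b \<noteq> 0 \<and> g = form 0 (-b) 0 0)"
proof -
  have "g = dual_I \<or> g = dual_II \<or> g = dual_III_ii \<or> g = dual_III_iii \<or> (\<exists>b. b \<noteq> 0 \<and> g = dual_III_i b)"
    using assms unfolding normal_forms_def by blast
  then show ?thesis unfolding NF_I NF_II NF_i NF_ii NF_iii .
qed

lemma A1: "(P::real) \<noteq> 0 \<Longrightarrow> P * ((R - S) / (2 * P) + - (S + R) / (2 * P)) = - S"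
  by (simp add: field_simps)
lemma A2: "(P::real) \<noteq> 0 \<Longrightarrow> P * (- (S + R) / (2 * P) - (R - S) / (2 * P)) = - R"
  by (simp add: field_simps)
lemma B1: "(1 + R) / 2 - (1 - R) / 2 = (R::real)" by (simp add: field_simps)
lemma B2: "(1 + R) / 2 * ((1 + R) / 2) - (1 - R) / 2 * ((1 - R) / 2) = (R::real)" by (simp add: field_simps)
lemma B3: "(R::real) \<noteq> 0 \<Longrightarrow> R * (- U / (2 * R) + - U / (2 * R)) = - U" by (simp add: field_simps)
lemma C1: "(S + 1) / 2 + (S - 1) / 2 = (S::real)" by (simp add: field_simps)
lemma C2: "(S + 1) / 2 * ((S + 1) / 2) - (S - 1) / 2 * ((S - 1) / 2) = (S::real)" by (simp add: field_simps)
lemma C3: "(S::real) \<noteq> 0 \<Longrightarrow> S * (- (U / (2 * S)) - U / (2 * S)) = - U" by (simp add: field_simps)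

lemma classify:
  assumes PU: "P * U = R * S"
  shows "\<exists>g\<in>normal_forms. \<exists>x w y z. y * y - z * z \<noteq> 0 \<and> Rd (aut x w y z) (form S P U R) g"
proof (cases "P = 0")
  case False
  define x where "x = (R - S) / (2 * P)"
  define w where "w = - (S + R) / (2 * P)"
  have xw: "P * (x + w) = - S" unfolding x_def w_def by (rule A1[OF False])
  have wx: "P * (w - x) = - R" unfolding x_def w_def by (rule A2[OF False])
  have K: "Rd (aut x w 1 0) (form (0 * (1 + 0) - P * (x + w)) P
      (0 * (1 * 1 - 0 * 0) - (0 * (1 - 0) - P * (w - x)) * (x + w) - 0 * (1 + 0) * (w - x))
      (0 * (1 - 0) - P * (w - x))) (form 0 P 0 0)"
    by (rule K3b)
  have e1: "0 * (1 + 0) - P * (x + w) = S" using xw by simp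
  have e3: "0 * (1 - 0) - P * (w - x) = R" using wx by simp
  have uu: "- R * (x + w) = U"
  proof -
    have "P * (- R * (x + w)) = - R * (P * (x + w))" by (simp add: algebra_simps)
    also have "\<dots> = P * U" using xw PU by simp
    finally have "P * (- R * (x + w)) = P * U" .
    then show ?thesis using mult_left_cancel[OF False] by blast
  qed
  have e2: "0 * (1 * 1 - 0 * 0) - (0 * (1 - 0) - P * (w - x)) * (x + w) - 0 * (1 + 0) * (w - x) = U"
  proof -
    have "0 * (1 * 1 - 0 * 0) - (0 * (1 - 0) - P * (w - x)) * (x + w) - 0 * (1 + 0) * (w - x)
        = - (0 * (1 - 0) - P * (w - x)) * (x + w)" by simp
    also have "\<dots> = - R * (x + w)" by (simp only: e3)
    finally show ?thesis using uu by simp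
  qed
  have "Rd (aut x w 1 0) (form S P U R) (form 0 P 0 0)" using K unfolding e2 unfolding e1 e3 .
  moreover have "form 0 P 0 0 \<in> normal_forms"
    using False unfolding normal_forms_def NF_i by (auto intro!: exI[of _ "-P"])
  ultimately show ?thesis by (intro bexI[of _ "form 0 P 0 0"] exI[of _ x] exI[of _ w] exI[of _ 1] exI[of _ 0]) auto
next
  case P0: True
  show ?thesis
  proof (cases "R = 0")
    case False
    then have S0: "S = 0" using PU P0 by simp
    define x where "x = - U / (2 * R)"
    define y where "y = (1 + R) / 2"
    define z where "z = (1 - R) / 2"
    have yz: "y - z = R" unfolding y_def z_def by (rule B1)
    have yz2: "y * y - z * z = R" unfolding y_def z_def by (rule B2)
    have xx: "R * (x + x) = - U" unfolding x_def by (rule B3[OF False])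
    have K: "Rd (aut x x y z) (form (0 * (y + z) - 0 * (x + x)) 0
      (0 * (y * y - z * z) - (1 * (y - z) - 0 * (x - x)) * (x + x) - 0 * (y + z) * (x - x))
      (1 * (y - z) - 0 * (x - x))) (form 0 0 0 1)"
      by (rule K3b)
    have e1: "0 * (y + z) - 0 * (x + x) = S" using S0 by simp
    have e3: "1 * (y - z) - 0 * (x - x) = R" using yz by simp
    have e2: "0 * (y * y - z * z) - (1 * (y - z) - 0 * (x - x)) * (x + x) - 0 * (y + z) * (x - x) = U"
    proof -
      have "0 * (y * y - z * z) - (1 * (y - z) - 0 * (x - x)) * (x + x) - 0 * (y + z) * (x - x)
          = - (1 * (y - z) - 0 * (x - x)) * (x + x)" by (simp add: algebra_simps)
      also have "\<dots> = - (R * (x + x))" by (simp only: e3 minus_mult_left)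
      finally show ?thesis using xx by linarith
    qed
    have "Rd (aut x x y z) (form S P U R) (form 0 0 0 1)" using K unfolding e2 unfolding e1 e3 P0 .
    moreover have "y * y - z * z \<noteq> 0" using yz2 False by simp
    moreover have "form 0 0 0 1 \<in> normal_forms" unfolding normal_forms_def NF_ii by auto
    ultimately show ?thesis by blast
  next
    case R0: True
    show ?thesis
    proof (cases "S = 0")
      case False
      define x where "x = U / (2 * S)"
      define y where "y = (S + 1) / 2"
      define z where "z = (S - 1) / 2"
      have yz: "y + z = S" unfolding y_def z_def by (rule C1)
      have yz2: "y * y - z * z = S" unfolding y_def z_def by (rule C2)
      have xx: "S * (- x - x) = - U" unfolding x_def by (rule C3[OF False])
      have K: "Rd (aut x (-x) y z) (form (1 * (y + z) - 0 * (x + - x)) 0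
        (0 * (y * y - z * z) - (0 * (y - z) - 0 * (- x - x)) * (x + - x) - 1 * (y + z) * (- x - x))
        (0 * (y - z) - 0 * (- x - x))) (form 1 0 0 0)"
        by (rule K3b)
      have e1: "1 * (y + z) - 0 * (x + - x) = S" using yz by simp
      have e3: "0 * (y - z) - 0 * (- x - x) = R" using R0 by simp
      have e2: "0 * (y * y - z * z) - (0 * (y - z) - 0 * (- x - x)) * (x + - x) - 1 * (y + z) * (- x - x) = U"
      proof -
        have "0 * (y * y - z * z) - (0 * (y - z) - 0 * (- x - x)) * (x + - x) - 1 * (y + z) * (- x - x)
            = - ((y + z) * (- x - x))" by (simp add: algebra_simps)
        also have "\<dots> = - (S * (- x - x))" by (simp only: yz)
        finally show ?thesis using xx by linarith
      qed
      have "Rd (aut x (-x) y z) (form S P U R) (form 1 0 0 0)" using K unfolding e2 unfolding e1 e3 P0 .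
      moreover have "y * y - z * z \<noteq> 0" using yz2 False by simp
      moreover have "form 1 0 0 0 \<in> normal_forms" unfolding normal_forms_def NF_iii by auto
      ultimately show ?thesis by blast
    next
      case S0: True
      show ?thesis
      proof (cases "U = 0")
        case False
        define y where "y = (U + 1) / 2"
        define z where "z = (U - 1) / 2"
        have yz2: "y * y - z * z = U" unfolding y_def z_def by (rule C2)
        have K: "Rd (aut 0 0 y z) (form (0 * (y + z) - 0 * (0 + 0)) 0
          (1 * (y * y - z * z) - (0 * (y - z) - 0 * (0 - 0)) * (0 + 0) - 0 * (y + z) * (0 - 0))
          (0 * (y - z) - 0 * (0 - 0))) (form 0 0 1 0)"
          by (rule K3b)
        have e1: "0 * (y + z) - 0 * (0 + 0) = S" using S0 by simp
        have e3: "0 * (y - z) - 0 * (0 - 0) = R" using R0 by simp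
        have e2: "1 * (y * y - z * z) - (0 * (y - z) - 0 * (0 - 0)) * (0 + 0) - 0 * (y + z) * (0 - 0) = U"
          using yz2 by simp
        have "Rd (aut 0 0 y z) (form S P U R) (form 0 0 1 0)" using K unfolding e2 unfolding e1 e3 P0 .
        moreover have "y * y - z * z \<noteq> 0" using yz2 False by simp
        moreover have "form 0 0 1 0 \<in> normal_forms" unfolding normal_forms_def NF_II by auto
        ultimately show ?thesis by blast
      next
        case U0: True
        have K: "Rd (aut 0 0 1 0) (form (0 * (1 + 0) - 0 * (0 + 0)) 0
          (0 * (1 * 1 - 0 * 0) - (0 * (1 - 0) - 0 * (0 - 0)) * (0 + 0) - 0 * (1 + 0) * (0 - 0))
          (0 * (1 - 0) - 0 * (0 - 0))) (form 0 0 0 0)"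
          by (rule K3b)
        then have "Rd (aut 0 0 1 0) (form S P U R) (form 0 0 0 0)" using P0 R0 S0 U0 by simp
        moreover have "form 0 0 0 0 \<in> normal_forms" unfolding normal_forms_def NF_I by auto
        ultimately show ?thesis by (intro bexI[of _ "form 0 0 0 0"] exI[of _ 0] exI[of _ 0] exI[of _ 1] exI[of _ 0]) auto
      qed
    qed
  qed
qed

definition npar :: "real \<Rightarrow> real \<Rightarrow> real \<Rightarrow> real \<Rightarrow> bool" where
  "npar S P U R \<longleftrightarrow> (S = 0 \<and> P = 0 \<and> U = 0 \<and> R = 0) \<or> (S = 0 \<and> P = 0 \<and> U = 1 \<and> R = 0)
     \<or> (S = 0 \<and> P = 0 \<and> U = 0 \<and> R = 1) \<or> (S = 1 \<and> P = 0 \<and> U = 0 \<and> R = 0) \<or> (S = 0 \<and> P \<noteq> 0 \<and> U = 0 \<and> R = 0)"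

lemma NF_par:
  assumes "g \<in> normal_forms"
  shows "\<exists>S P U R. g = form S P U R \<and> npar S P U R"
  using NF_cases[OF assms]
proof (elim disjE exE conjE)
  assume "g = form 0 0 0 0" then show ?thesis unfolding npar_def by (intro exI[of _ 0] exI[of _ 0] exI[of _ 0] exI[of _ 0]) simp
next
  assume "g = form 0 0 1 0" then show ?thesis unfolding npar_def by (intro exI[of _ 0] exI[of _ 0] exI[of _ 1] exI[of _ 0]) simp
next
  assume "g = form 0 0 0 1" then show ?thesis unfolding npar_def by (intro exI[of _ 0] exI[of _ 0] exI[of _ 0] exI[of _ 1]) simp
next
  assume "g = form 1 0 0 0" then show ?thesis unfolding npar_def by (intro exI[of _ 1] exI[of _ 0] exI[of _ 0] exI[of _ 0]) simp
next
  fix b assume "b \<noteq> 0" "g = form 0 (-b) 0 0" then show ?thesis unfolding npar_def by (intro exI[of _ 0] exI[of _ "-b"] exI[of _ 0] exI[of _ 0]) simp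
qed

lemma uniq:
  assumes g1: "g1 \<in> normal_forms" and g2: "g2 \<in> normal_forms" and yz: "y * y - z * z \<noteq> 0"
    and Rd: "Rd (aut x w y z) g1 g2"
  shows "g1 = g2"
proof -
  have "y * y - z * z = (y + z) * (y - z)" by (simp add: algebra_simps)
  then have yz1: "y + z \<noteq> 0" and yz2: "y - z \<noteq> 0" using yz by auto
  obtain S P U R where G1: "g1 = form S P U R" and N1: "npar S P U R" using NF_par[OF g1] by blast
  obtain s p u r where G2: "g2 = form s p u r" and N2: "npar s p u r" using NF_par[OF g2] by blast
  note R' = Rd[unfolded G1 G2]
  have e1: "s * (y + z) = S + P * (x + w)" by (rule K3a(1)[OF R'])
  have e2: "p * (y + z) = P * (y + z)" by (rule K3a(2)[OF R'])
  have e3: "r * (y * y - z * z) = (y + z) * (R + p * (w - x))" by (rule K3a(3)[OF R'])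
  have e4: "u * (y * y - z * z) = U + R * (x + w) + s * (y + z) * (w - x)" by (rule K3a(4)[OF R'])
  have pP: "p = P" using e2 yz1 by simp
  have "S = s \<and> P = p \<and> U = u \<and> R = r"
  proof -
    have i2: "s = 0 \<longleftrightarrow> S = 0" if "P = 0" using e1 yz1 that by auto
    have i3: "r = 0 \<longleftrightarrow> R = 0" if "P = 0" using e3 pP yz yz1 that by auto
    have i4: "u = 0 \<longleftrightarrow> U = 0" if "P = 0" "S = 0" "R = 0"
    proof -
      have "s = 0" using i2 that by simp
      then have "u * (y * y - z * z) = U" using e4 that by simp
      then show ?thesis using yz by auto
    qed
    show ?thesis
      using N1 N2 pP i2 i3 i4 unfolding npar_def by (elim disjE conjE; simp)
  qed
  then show ?thesis using G1 G2 by simp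
qed



theorem mainTheorem7:
  fixes f' ft' :: sconst
  assumes "manin_triple f' ft'"
    and "lie_isomorphic f' bianchiIII"
  shows "\<exists>!g. g \<in> normal_forms \<and> manin_isomorphic f' ft' bianchiIII g"
proof -
  from assms(2) obtain A0 where A0: "invertible A0" "basis_change A0 f' = bianchiIII"
    unfolding lie_isomorphic_def by blast
  define ft0 where "ft0 = dual_basis_change A0 ft'"
  have L: "lie_sc (double_sc bianchiIII ft0)"
    using lie_transfer[OF A0(1)] assms(1) A0(2) unfolding manin_triple_def ft0_def by metis
  obtain S P U R where ft0f: "ft0 = form S P U R" and PU: "P * U = R * S"
    using K5[OF L] by blast
  obtain g x w y z where g: "g \<in> normal_forms" and yz: "y * y - z * z \<noteq> 0"
    and Rdg: "Rd (aut x w y z) (form S P U R) g"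
    using classify[OF PU] by blast
  define Phi where "Phi = aut x w y z"
  have Phiinv: "invertible Phi" unfolding Phi_def by (rule K2[OF yz])
  have RbA0: "Rb A0 f' bianchiIII" using bc_iff[OF A0(1)] A0(2) by blast
  have RdA0: "Rd A0 ft' ft0" unfolding ft0_def by (rule dbc_Rd[OF A0(1)])
  have inv: "invertible (A0 ** Phi)" by (rule invertible_mult[OF A0(1) Phiinv])
  have Rb1: "Rb (A0 ** Phi) f' bianchiIII" unfolding Phi_def by (rule Rb_comp[OF RbA0 K1])
  then have bc: "basis_change (A0 ** Phi) f' = bianchiIII" using bc_iff[OF inv] by blast
  have Rd1: "Rd (A0 ** Phi) ft' g" unfolding Phi_def by (rule Rd_comp[OF RdA0 Rdg[folded ft0f]])
  then have dbc: "dual_basis_change (A0 ** Phi) ft' = g" using dbc_iff[OF inv] by blast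
  have ex: "manin_isomorphic f' ft' bianchiIII g"
    unfolding manin_isomorphic_def using inv bc dbc by blast
  show ?thesis
  proof (rule ex1I[of _ g])
    show "g \<in> normal_forms \<and> manin_isomorphic f' ft' bianchiIII g" using g ex by simp
  next
    fix g2 assume "g2 \<in> normal_forms \<and> manin_isomorphic f' ft' bianchiIII g2"
    then obtain A2 where g2: "g2 \<in> normal_forms" and A2: "invertible A2"
      "basis_change A2 f' = bianchiIII" "dual_basis_change A2 ft' = g2"
      unfolding manin_isomorphic_def by blast
    define B where "B = matrix_inv (A0 ** Phi)"
    have RbB: "Rb B bianchiIII f'" unfolding B_def by (rule Rb_sym[OF inv Rb1])
    have RdB: "Rd B g ft'" unfolding B_def by (rule Rd_sym[OF inv Rd1])
    have Rb2: "Rb A2 f' bianchiIII" using bc_iff[OF A2(1)] A2(2) by blast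
    have Rd2: "Rd A2 ft' g2" using dbc_iff[OF A2(1)] A2(3) by blast
    have RbC: "Rb (B ** A2) bianchiIII bianchiIII" by (rule Rb_comp[OF RbB Rb2])
    have RdC: "Rd (B ** A2) g g2" by (rule Rd_comp[OF RdB Rd2])
    have invC: "invertible (B ** A2)"
      unfolding B_def by (rule invertible_mult[OF invertible_inv[OF inv] A2(1)])
    obtain x' w' y' z' where C: "B ** A2 = aut x' w' y' z'" and yz': "y' * y' - z' * z' \<noteq> 0"
      using K4[OF invC RbC] by blast
    have "g = g2" by (rule uniq[OF g g2 yz' RdC[unfolded C]])
    then show "g2 = g" by simp
  qed
qed

end
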